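(* Let $k\le n$ be a positive integer and $\epsilon\in(0,1)$. Suppose $f:2^E\times O^E\to\mathbb{R}_{\ge0}$ is worst-case monotone and worst-case submodular with respect to $p(\phi)$ and satisfies minimal dependency. Let $\pi^f$ be the adaptive stochastic worst-case greedy policy with parameters $k,\epsilon$, and let $\pi^*_{wc}$ maximize $f_{wc}(\pi)$ over all deterministic policies $\pi$ with $|E(\pi,\phi)|\le k$ for all $\phi\in U^+$. Then $$\tilde f_{wc}(\pi^f)\ \ge\ \Big(1-\frac1e-\epsilon\Big)f_{wc}(\pi^*_{wc}),$$ and $\pi^f$ performs a total of $O(n\log(1/\epsilon))$ evaluations of worst-case marginal utilities $f_{wc}(e\mid\psi)$.
   Context: Setting. $E$ is a finite set of $n$ items and $O$ a finite set of states. A realization is a function $\phi:E\to O$; $p$ is a probability distribution (prior) on the set of all realizations, $\Phi$ denotes a random realization with law $p$, and $U^+=\{\phi: p(\phi)>0\}$. A partial realization is a function $\psi:S\to O$ with $S\subseteq E$, $\mathrm{dom}(\psi)=S$; it is identified with the set of pairs $\{(e,\psi(e)):e\in S\}$, so $\psi\subseteq\psi'$ means $\mathrm{dom}(\psi)\subseteq\mathrm{dom}(\psi')$ and they agree on $\mathrm{dom}(\psi)$. A realization $\phi$ is consistent with $\psi$, written $\phi\sim\psi$, if it agrees with $\psi$ on $\mathrm{dom}(\psi)$. Only partial realizations with $\Pr[\Phi\sim\psi]>0$ are considered, and $p(\phi\mid\psi)=\Pr[\Phi=\phi\mid\Phi\sim\psi]$. For $S\subseteq E$ and a partial realization $\psi$,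 $f(S,\psi)=\mathbb{E}[f(S,\Phi)\mid\Phi\sim\psi]$. For $e\notin\mathrm{dom}(\psi)$, let $O(e,\psi)=\{o\in O:\exists\phi\text{ with }p(\phi\mid\psi)>0,\ \phi(e)=o\}$ and define the worst-case marginal utility $f_{wc}(e\mid\psi)=\min_{o\in O(e,\psi)}\{f(\mathrm{dom}(\psi)\cup\{e\},\psi\cup\{(e,o)\})-f(\mathrm{dom}(\psi),\psi)\}$. $f$ is worst-case submodular if $f_{wc}(e\mid\psi)\ge f_{wc}(e\mid\psi')$ for all partial realizations $\psi\subseteq\psi'$ and all $e\in E\setminus\mathrm{dom}(\psi')$; it is worst-case monotone if $f_{wc}(e\mid\psi)\ge0$ for all $\psi$ and $e\notin\mathrm{dom}(\psi)$. $f$ satisfies minimal dependency if $f(\mathrm{dom}(\psi),\psi)=f(\mathrm{dom}(\psi),\phi)$ for every partial realization $\psi$ and every $\phi\in U^+$ with $\phi\sim\psi$. Policies. A (deterministic) policy $\pi$ is a rule which, given the current observation (the partial realization of the items selected so far), either selects a new item or stops; after an item $e$ is selected under realization $\phi$, the state $\phi(e)$ is observed. A randomized policy may additionally use internal randomness independent of $\Phi$. $E(\pi,\phi)$ is the (possibly random) set of items selected by $\pi$ under $\phi$. For deterministic $\pi$, $f_{wc}(\pi)=\min_{\phi\in U^+}f(E(\pi,\phi),\phi)$; for a randomized policy the expected worst-case utility is $\tilde f_{wc}(\pi)=\min_{\phi\in U^+}\mathbb{E}[f(E(\pi,\phi),\phi)]$, the expectation over the policy's internal randomness. Adaptive stochastic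 worst-case greedy policy $\pi^f$: let $s=\lceil\frac nk\ln\frac1\epsilon\rceil$. Start with $\psi_0=\emptyset$; for $t=1,\dots,k$, draw a set $H$ uniformly at random among subsets of $E\setminus\mathrm{dom}(\psi_{t-1})$ of size $\min\{s,n-t+1\}$ (independently of everything else), select $e_t\in\arg\max_{e\in H}f_{wc}(e\mid\psi_{t-1})$, observe $\Phi(e_t)$, and set $\psi_t=\psi_{t-1}\cup\{(e_t,\Phi(e_t))\}$. *)

theory Defs
  imports "HOL-Probability.Probability"
begin

text \<open>Items are the elements of a finite type 'e (E = UNIV, n = CARD('e)),
states the elements of a finite type 'o (O = UNIV).  A realization is a
function 'e \<Rightarrow> 'o, a partial realization is a map 'e \<rightharpoonup> 'o;
psi \<subseteq> psi' is map_le.\<close>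

definition consistent :: "('e \<Rightarrow> 'o) \<Rightarrow> ('e \<rightharpoonup> 'o) \<Rightarrow> bool" where
  "consistent phi psi \<longleftrightarrow> (\<forall>e\<in>dom psi. psi e = Some (phi e))"

definition pr_cons :: "(('e::finite \<Rightarrow> 'o::finite) \<Rightarrow> real) \<Rightarrow> ('e \<rightharpoonup> 'o) \<Rightarrow> real" where
  "pr_cons p psi = (\<Sum>phi | consistent phi psi. p phi)"

definition valid_partial :: "(('e::finite \<Rightarrow> 'o::finite) \<Rightarrow> real) \<Rightarrow> ('e \<rightharpoonup> 'o) \<Rightarrow> bool" where
  "valid_partial p psi \<longleftrightarrow> pr_cons p psi > 0"

definition fcond :: "(('e::finite \<Rightarrow> 'o::finite) \<Rightarrow> real) \<Rightarrow> ('e set \<Rightarrow> ('e \<Rightarrow> 'o) \<Rightarrow> real)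
    \<Rightarrow> 'e set \<Rightarrow> ('e \<rightharpoonup> 'o) \<Rightarrow> real" where
  "fcond p f S psi = (\<Sum>phi | consistent phi psi. p phi * f S phi) / pr_cons p psi"

definition states_of :: "(('e::finite \<Rightarrow> 'o::finite) \<Rightarrow> real) \<Rightarrow> 'e \<Rightarrow> ('e \<rightharpoonup> 'o) \<Rightarrow> 'o set" where
  "states_of p e psi = {st. \<exists>phi. p phi > 0 \<and> consistent phi psi \<and> phi e = st}"

definition fwc :: "(('e::finite \<Rightarrow> 'o::finite) \<Rightarrow> real) \<Rightarrow> ('e set \<Rightarrow> ('e \<Rightarrow> 'o) \<Rightarrow> real)
    \<Rightarrow> 'e \<Rightarrow> ('e \<rightharpoonup> 'o) \<Rightarrow> real" where
  "fwc p f e psi = Min ((\<lambda>st. fcond p f (insert e (dom psi)) (psi(e \<mapsto> st)) - fcond p f (dom psi) psi)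
                        ` states_of p e psi)"

definition wc_submodular :: "(('e::finite \<Rightarrow> 'o::finite) \<Rightarrow> real) \<Rightarrow> ('e set \<Rightarrow> ('e \<Rightarrow> 'o) \<Rightarrow> real) \<Rightarrow> bool" where
  "wc_submodular p f \<longleftrightarrow> (\<forall>psi psi' e. valid_partial p psi \<longrightarrow> valid_partial p psi' \<longrightarrow>
      psi \<subseteq>\<^sub>m psi' \<longrightarrow> e \<notin> dom psi' \<longrightarrow> fwc p f e psi \<ge> fwc p f e psi')"

definition wc_monotone :: "(('e::finite \<Rightarrow> 'o::finite) \<Rightarrow> real) \<Rightarrow> ('e set \<Rightarrow> ('e \<Rightarrow> 'o) \<Rightarrow> real) \<Rightarrow> bool" where
  "wc_monotone p f \<longleftrightarrow> (\<forall>psi e. valid_partial p psi \<longrightarrow> e \<notin> dom psi \<longrightarrow> fwc p f e psi \<ge> 0)"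

definition minimal_dependency :: "(('e::finite \<Rightarrow> 'o::finite) \<Rightarrow> real) \<Rightarrow> ('e set \<Rightarrow> ('e \<Rightarrow> 'o) \<Rightarrow> real) \<Rightarrow> bool" where
  "minimal_dependency p f \<longleftrightarrow> (\<forall>psi phi. valid_partial p psi \<longrightarrow> p phi > 0 \<longrightarrow> consistent phi psi \<longrightarrow>
      fcond p f (dom psi) psi = f (dom psi) phi)"

text \<open>Deterministic policies: given the current observation, return Some e
(select e) or None (stop).  Selecting an already selected item is treated as stopping.
After CARD('e) steps no new item can be selected, so the run has terminated.\<close>

type_synonym ('e, 'o) policy = "('e \<rightharpoonup> 'o) \<Rightarrow> 'e option"

definition policy_step :: "('e, 'o) policy \<Rightarrow> ('e \<Rightarrow> 'o) \<Rightarrow> ('e \<rightharpoonup> 'o) \<Rightarrow> ('e \<rightharpoonup> 'o)" where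
  "policy_step pol phi psi = (case pol psi of None \<Rightarrow> psi
      | Some e \<Rightarrow> (if e \<in> dom psi then psi else psi(e \<mapsto> phi e)))"

definition selected :: "('e::finite, 'o) policy \<Rightarrow> ('e \<Rightarrow> 'o) \<Rightarrow> 'e set" where
  "selected pol phi = dom ((policy_step pol phi ^^ CARD('e)) Map.empty)"

definition fwc_policy :: "(('e::finite \<Rightarrow> 'o::finite) \<Rightarrow> real) \<Rightarrow> ('e set \<Rightarrow> ('e \<Rightarrow> 'o) \<Rightarrow> real)
    \<Rightarrow> ('e, 'o) policy \<Rightarrow> real" where
  "fwc_policy p f pol = Min ((\<lambda>phi. f (selected pol phi) phi) ` {phi. p phi > 0})"

text \<open>The adaptive stochastic worst-case greedy policy.  sel H psi is the
(tie-breaking) choice of an element of argmax_{e in H} fwc(e|psi).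
greedy_run ... s phi t is the distribution of (psi_t, number of evaluations of
fwc performed in steps 1..t) under realization phi.\<close>

definition greedy_size :: "nat \<Rightarrow> nat \<Rightarrow> real \<Rightarrow> nat" where
  "greedy_size n k eps = nat \<lceil>real n / real k * ln (1 / eps)\<rceil>"

fun greedy_run :: "('e set \<Rightarrow> ('e \<rightharpoonup> 'o) \<Rightarrow> 'e) \<Rightarrow> nat \<Rightarrow> ('e::finite \<Rightarrow> 'o)
    \<Rightarrow> nat \<Rightarrow> (('e \<rightharpoonup> 'o) \<times> nat) pmf" where
  "greedy_run sel s phi 0 = return_pmf (Map.empty, 0)"
| "greedy_run sel s phi (Suc t) =
     bind_pmf (greedy_run sel s phi t) (\<lambda>(psi, c).
       bind_pmf (pmf_of_set {H. H \<subseteq> - dom psi \<and> card H = min s (CARD('e) - t)}) (\<lambda>H.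
         return_pmf (psi(sel H psi \<mapsto> phi (sel H psi)), c + card H)))"

definition greedy_selector :: "(('e::finite \<Rightarrow> 'o::finite) \<Rightarrow> real) \<Rightarrow> ('e set \<Rightarrow> ('e \<Rightarrow> 'o) \<Rightarrow> real)
    \<Rightarrow> ('e set \<Rightarrow> ('e \<rightharpoonup> 'o) \<Rightarrow> 'e) \<Rightarrow> bool" where
  "greedy_selector p f sel \<longleftrightarrow> (\<forall>H psi. H \<noteq> {} \<longrightarrow> H \<inter> dom psi = {} \<longrightarrow> valid_partial p psi \<longrightarrow>
      sel H psi \<in> H \<and> (\<forall>e\<in>H. fwc p f e psi \<le> fwc p f (sel H psi) psi))"

definition greedy_value :: "(('e::finite \<Rightarrow> 'o::finite) \<Rightarrow> real) \<Rightarrow> ('e set \<Rightarrow> ('e \<Rightarrow> 'o) \<Rightarrow> real)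
    \<Rightarrow> ('e set \<Rightarrow> ('e \<rightharpoonup> 'o) \<Rightarrow> 'e) \<Rightarrow> nat \<Rightarrow> nat \<Rightarrow> real" where
  "greedy_value p f sel s k = Min ((\<lambda>phi. measure_pmf.expectation (greedy_run sel s phi k)
       (\<lambda>x. f (dom (fst x)) phi)) ` {phi. p phi > 0})"

end

theory Submission
  imports Defs
begin


lemma finite_states_of[simp]: "finite (states_of p e psi)"
  by (rule finite_subset[of _ UNIV]) auto

context
  fixes p :: "('e::finite \<Rightarrow> 'o::finite) \<Rightarrow> real"
    and f :: "'e set \<Rightarrow> ('e \<Rightarrow> 'o) \<Rightarrow> real"
  assumes p_nonneg: "\<forall>phi. p phi \<ge> 0"
begin

lemma valid_ex: assumes "valid_partial p psi" shows "\<exists>phi. p phi > 0 \<and> consistent phi psi"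
proof (rule ccontr)
  assume "\<not> ?thesis"
  then have "\<forall>phi. consistent phi psi \<longrightarrow> p phi \<le> 0" by (meson not_le)
  then have "pr_cons p psi \<le> 0" unfolding pr_cons_def by (intro sum_nonpos) (metis (mono_tags) mem_Collect_eq not_le)
  with assms show False unfolding valid_partial_def by simp
qed

lemma valid_of: assumes "p phi > 0" "consistent phi psi" shows "valid_partial p psi"
proof -
  have "p phi \<le> pr_cons p psi" unfolding pr_cons_def
    using assms p_nonneg by (intro member_le_sum) auto
  then show ?thesis using assms unfolding valid_partial_def by simp
qed

lemma states_of_ne: assumes "valid_partial p psi" shows "states_of p e psi \<noteq> {}"
  using valid_ex[OF assms] unfolding states_of_def by auto

lemma fwc_le: assumes "st \<in> states_of p e psi"
  shows "fwc p f e psi \<le> fcond p f (insert e (dom psi)) (psi(e \<mapsto> st)) - fcond p f (dom psi) psi"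
  unfolding fwc_def using assms by (intro Min_le) auto

lemma fwc_attained: assumes "valid_partial p psi"
  shows "\<exists>st\<in>states_of p e psi. fwc p f e psi = fcond p f (insert e (dom psi)) (psi(e \<mapsto> st)) - fcond p f (dom psi) psi"
proof -
  have "fwc p f e psi \<in> (\<lambda>st. fcond p f (insert e (dom psi)) (psi(e \<mapsto> st)) - fcond p f (dom psi) psi) ` states_of p e psi"
    unfolding fwc_def using states_of_ne[OF assms] by (intro Min_in) auto
  then show ?thesis by auto
qed

lemma states_of_valid_upd: assumes "st \<in> states_of p e psi" "e \<notin> dom psi"
  shows "valid_partial p (psi(e \<mapsto> st))"
proof -
  from assms obtain phi where "p phi > 0" "consistent phi psi" "phi e = st" unfolding states_of_def by auto
  then show ?thesis using assms(2) by (intro valid_of[of phi]) (auto simp: consistent_def)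
qed

lemma state_in: assumes "p phi > 0" "consistent phi psi" shows "phi e \<in> states_of p e psi"
  using assms unfolding states_of_def by auto

lemma consistent_restrict: "consistent phi (restrict_map (Some \<circ> phi) S)"
  unfolding consistent_def by (auto simp: restrict_map_def split: if_splits)

lemma f_mono_insert:
  assumes mono: "wc_monotone p f" and mindep: "minimal_dependency p f" and pp: "p phi > 0" and eS: "e \<notin> S"
  shows "f S phi \<le> f (insert e S) phi"
proof -
  let ?psi = "restrict_map (Some \<circ> phi) S"
  have d: "dom ?psi = S" by auto
  have v: "valid_partial p ?psi" by (rule valid_of[OF pp consistent_restrict])
  have eq2: "restrict_map (Some \<circ> phi) (insert e S) = ?psi(e \<mapsto> phi e)"
    by (auto simp: restrict_map_def fun_eq_iff)
  have v2: "valid_partial p (restrict_map (Some \<circ> phi) (insert e S))" by (rule valid_of[OF pp consistent_restrict])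
  have f1: "fcond p f (dom ?psi) ?psi = f S phi"
    using mindep[unfolded minimal_dependency_def, rule_format, OF v pp consistent_restrict] d by simp
  have f2: "fcond p f (insert e S) (?psi(e \<mapsto> phi e)) = f (insert e S) phi"
    using mindep[unfolded minimal_dependency_def, rule_format, OF v2 pp consistent_restrict] eq2 d by simp
  have "0 \<le> fwc p f e ?psi" using mono v eS d unfolding wc_monotone_def by auto
  also have "\<dots> \<le> fcond p f (insert e (dom ?psi)) (?psi(e \<mapsto> phi e)) - fcond p f (dom ?psi) ?psi"
    by (rule fwc_le, rule state_in[OF pp consistent_restrict])
  finally show ?thesis using f1 f2 d by simp
qed

lemma f_mono:
  assumes mono: "wc_monotone p f" and mindep: "minimal_dependency p f" and pp: "p phi > 0" and ST: "S \<subseteq> T"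
  shows "f S phi \<le> f T phi"
proof -
  have "f S phi \<le> f (S \<union> D) phi" if "finite D" for D :: "'e set"
    using that
  proof (induction D rule: finite_induct)
    case empty then show ?case by simp
  next
    case (insert x F)
    show ?case
    proof (cases "x \<in> S \<union> F")
      case True then show ?thesis using insert by (simp add: insert_absorb)
    next
      case False
      then have "f (S \<union> F) phi \<le> f (insert x (S \<union> F)) phi" by (intro f_mono_insert[OF mono mindep pp])
      then show ?thesis using insert by simp
    qed
  qed
  from this[of T] ST show ?thesis by (simp add: sup.absorb2)
qed

end


definition adv_val :: "(('e::finite \<Rightarrow> 'o::finite) \<Rightarrow> real) \<Rightarrow> ('e set \<Rightarrow> ('e \<Rightarrow> 'o) \<Rightarrow> real) \<Rightarrow> 'e \<Rightarrow> ('e \<rightharpoonup> 'o) \<Rightarrow> 'o" where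
  "adv_val p f e C = (SOME st. st \<in> states_of p e C \<and>
     fwc p f e C = fcond p f (insert e (dom C)) (C(e \<mapsto> st)) - fcond p f (dom C) C)"

definition adv_step :: "(('e::finite \<Rightarrow> 'o::finite) \<Rightarrow> real) \<Rightarrow> ('e set \<Rightarrow> ('e \<Rightarrow> 'o) \<Rightarrow> real) \<Rightarrow> ('e, 'o) policy
   \<Rightarrow> ('e \<rightharpoonup> 'o) \<Rightarrow> ('e \<rightharpoonup> 'o) \<Rightarrow> ('e \<rightharpoonup> 'o)" where
  "adv_step p f pol psi q = (case pol q of None \<Rightarrow> q
     | Some e \<Rightarrow> (if e \<in> dom q then q else if e \<in> dom psi then q(e := psi e)
                   else q(e \<mapsto> adv_val p f e (psi ++ q))))"

context
  fixes p :: "('e::finite \<Rightarrow> 'o::finite) \<Rightarrow> real"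
    and f :: "'e set \<Rightarrow> ('e \<Rightarrow> 'o) \<Rightarrow> real"
  assumes p_nonneg: "\<forall>phi. p phi \<ge> 0"
    and mono: "wc_monotone p f"
    and submod: "wc_submodular p f"
    and mindep: "minimal_dependency p f"
begin

lemma adv_val_prop: assumes "valid_partial p C"
  shows "adv_val p f e C \<in> states_of p e C \<and>
     fwc p f e C = fcond p f (insert e (dom C)) (C(e \<mapsto> adv_val p f e C)) - fcond p f (dom C) C"
  unfolding adv_val_def by (rule someI_ex) (use fwc_attained[OF p_nonneg assms] in blast)

definition "adv_inv psi q \<longleftrightarrow> (\<forall>e\<in>dom psi. e \<in> dom q \<longrightarrow> q e = psi e) \<and> valid_partial p (psi ++ q) \<and>
   fcond p f (dom (psi ++ q)) (psi ++ q) - fcond p f (dom psi) psi \<le> (\<Sum>e\<in>dom q - dom psi. fwc p f e psi)"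

lemma agree_le: assumes "\<forall>e\<in>dom psi. e \<in> dom q \<longrightarrow> q e = psi e" shows "psi \<subseteq>\<^sub>m psi ++ q"
  using assms unfolding map_le_def by (auto simp: map_add_def split: option.splits)

lemma adv_inv_0: "valid_partial p psi \<Longrightarrow> adv_inv psi Map.empty"
  unfolding adv_inv_def by simp

lemma adv_inv_step: assumes v: "valid_partial p psi" and I: "adv_inv psi q"
  shows "adv_inv psi (adv_step p f pol psi q)"
proof (cases "pol q")
  case None then show ?thesis using I by (simp add: adv_step_def)
next
  case (Some e)
  show ?thesis
  proof (cases "e \<in> dom q")
    case True then show ?thesis using I Some by (simp add: adv_step_def)
  next
    case nq: False
    show ?thesis
    proof (cases "e \<in> dom psi")
      case True
      then obtain y where y: "psi e = Some y" by auto
      have st: "adv_step p f pol psi q = q(e \<mapsto> y)" using Some nq True y by (simp add: adv_step_def)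
      have eq: "psi ++ q(e \<mapsto> y) = psi ++ q" using nq y by (auto simp: fun_eq_iff map_add_def domIff split: option.splits)
      have d: "dom (q(e \<mapsto> y)) - dom psi = dom q - dom psi" using True by auto
      show ?thesis using I unfolding adv_inv_def st eq d using y by auto
    next
      case np: False
      define C where "C = psi ++ q"
      have vC: "valid_partial p C" using I unfolding adv_inv_def C_def by simp
      define st where "st = adv_val p f e C"
      have st_prop: "st \<in> states_of p e C"
        "fwc p f e C = fcond p f (insert e (dom C)) (C(e \<mapsto> st)) - fcond p f (dom C) C"
        using adv_val_prop[OF vC, of e] unfolding st_def by auto
      have stp: "adv_step p f pol psi q = q(e \<mapsto> st)" using Some nq np by (simp add: adv_step_def st_def C_def)
      have eC: "e \<notin> dom C" using nq np unfolding C_def by auto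
      have eq: "psi ++ q(e \<mapsto> st) = C(e \<mapsto> st)" unfolding C_def by simp
      have d: "dom (q(e \<mapsto> st)) - dom psi = insert e (dom q - dom psi)" using np by auto
      have le: "psi \<subseteq>\<^sub>m C" unfolding C_def by (rule agree_le) (use I in \<open>auto simp: adv_inv_def\<close>)
      have sub: "fwc p f e C \<le> fwc p f e psi" using submod v vC le eC unfolding wc_submodular_def by blast
      have v2: "valid_partial p (C(e \<mapsto> st))" by (rule states_of_valid_upd[OF p_nonneg st_prop(1) eC])
      have old: "fcond p f (dom C) C - fcond p f (dom psi) psi \<le> (\<Sum>e\<in>dom q - dom psi. fwc p f e psi)"
        using I unfolding adv_inv_def C_def by simp
      have "fcond p f (dom (C(e \<mapsto> st))) (C(e \<mapsto> st)) - fcond p f (dom psi) psi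
            = fwc p f e C + (fcond p f (dom C) C - fcond p f (dom psi) psi)" using st_prop(2) by simp
      also have "\<dots> \<le> fwc p f e psi + (\<Sum>e\<in>dom q - dom psi. fwc p f e psi)" using sub old by simp
      also have "\<dots> = (\<Sum>e\<in>insert e (dom q - dom psi). fwc p f e psi)" using nq by (subst sum.insert) auto
      finally have fc: "fcond p f (dom (C(e \<mapsto> st))) (C(e \<mapsto> st)) - fcond p f (dom psi) psi
            \<le> (\<Sum>e\<in>insert e (dom q - dom psi). fwc p f e psi)" .
      show ?thesis unfolding adv_inv_def stp eq d using I np v2 fc by (auto simp: adv_inv_def)
    qed
  qed
qed

lemma adv_step_cases: "adv_step p f pol psi q = q \<or>
   (\<exists>e. pol q = Some e \<and> e \<notin> dom q \<and> adv_step p f pol psi q = q(e := adv_step p f pol psi q e) \<and> adv_step p f pol psi q e \<noteq> None)"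
  unfolding adv_step_def by (auto split: option.splits)

lemma adv_step_le: "q \<subseteq>\<^sub>m adv_step p f pol psi q"
  using adv_step_cases[of pol psi q] unfolding map_le_def
proof (elim disjE exE conjE)
  fix e assume "e \<notin> dom q" "adv_step p f pol psi q = q(e := adv_step p f pol psi q e)"
  then show "\<forall>a\<in>dom q. q a = adv_step p f pol psi q a" by (metis fun_upd_other)
qed simp

lemma adv_iter_le: "(adv_step p f pol psi ^^ j) m \<subseteq>\<^sub>m (adv_step p f pol psi ^^ (j + d)) m"
proof (induction d)
  case 0 then show ?case by (simp add: map_le_refl)
next
  case (Suc d) then show ?case using adv_step_le map_le_trans by fastforce
qed

lemma adversary:
  fixes pol :: "('e, 'o) policy"
  assumes v: "valid_partial p psi" and polk: "\<forall>phi. p phi > 0 \<longrightarrow> card (selected pol phi) \<le> k"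
  shows "\<exists>M. M \<inter> dom psi = {} \<and> card M \<le> k \<and>
     fwc_policy p f pol \<le> fcond p f (dom psi) psi + (\<Sum>e\<in>M. fwc p f e psi)"
proof -
  define q where "q j = (adv_step p f pol psi ^^ j) Map.empty" for j
  have I: "adv_inv psi (q j)" for j
    unfolding q_def by (induction j) (auto intro: adv_inv_0[OF v] adv_inv_step[OF v])
  define N where "N = CARD('e)"
  have vN: "valid_partial p (psi ++ q N)" using I[of N] unfolding adv_inv_def by simp
  obtain phi' where pp: "p phi' > 0" and cons: "consistent phi' (psi ++ q N)"
    using valid_ex[OF p_nonneg vN] by blast
  have consq: "consistent phi' (q N)" using cons unfolding consistent_def
    by (auto simp: map_add_def split: option.splits)
  have le: "q j \<subseteq>\<^sub>m q N" if "j \<le> N" for j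
    using adv_iter_le[where pol=pol and psi=psi and j=j and d="N - j" and m=Map.empty] that unfolding q_def by simp
  have run: "(policy_step pol phi' ^^ j) Map.empty = q j" if "j \<le> N" for j
    using that
  proof (induction j)
    case 0 then show ?case by (simp add: q_def)
  next
    case (Suc j)
    have IH: "(policy_step pol phi' ^^ j) Map.empty = q j" using Suc by simp
    have qs: "q (Suc j) = adv_step p f pol psi (q j)" by (simp add: q_def)
    have "policy_step pol phi' (q j) = adv_step p f pol psi (q j)"
    proof (cases "adv_step p f pol psi (q j) = q j")
      case True
      then show ?thesis unfolding policy_step_def adv_step_def
        by (auto split: option.splits if_splits simp: fun_eq_iff) metis
    next
      case False
      then obtain e where e: "pol (q j) = Some e" "e \<notin> dom (q j)"
        "adv_step p f pol psi (q j) = (q j)(e := adv_step p f pol psi (q j) e)"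
        "adv_step p f pol psi (q j) e \<noteq> None"
        using adv_step_cases[of pol psi "q j"] by blast
      have "q (Suc j) e = q N e" using le[OF Suc.prems] e(4) qs unfolding map_le_def by auto
      also have "\<dots> = Some (phi' e)" using consq e(4) qs calculation unfolding consistent_def by auto
      finally have "adv_step p f pol psi (q j) e = Some (phi' e)" using qs by simp
      then show ?thesis using e unfolding policy_step_def by simp
    qed
    then show ?case using IH qs by simp
  qed
  have selq: "selected pol phi' = dom (q N)" unfolding selected_def N_def using run[of N] by (simp add: N_def)
  define M where "M = dom (q N) - dom psi"
  have cardM: "card M \<le> k"
  proof -
    have "card M \<le> card (dom (q N))" unfolding M_def by (intro card_mono) auto
    also have "\<dots> \<le> k" using polk pp selq by auto
    finally show ?thesis .
  qed
  have "fwc_policy p f pol \<le> f (selected pol phi') phi'"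
    unfolding fwc_policy_def using pp by (intro Min_le) auto
  also have "\<dots> \<le> f (dom (psi ++ q N)) phi'" unfolding selq
    by (rule f_mono[OF p_nonneg mono mindep pp]) auto
  also have "\<dots> = fcond p f (dom (psi ++ q N)) (psi ++ q N)"
    using mindep[unfolded minimal_dependency_def, rule_format, OF vN pp cons] by simp
  also have "\<dots> \<le> fcond p f (dom psi) psi + (\<Sum>e\<in>M. fwc p f e psi)"
    using I[of N] unfolding adv_inv_def M_def by simp
  finally show ?thesis using cardM unfolding M_def by blast
qed

end


lemma binom_ratio:
  fixes a r h :: nat assumes "a \<le> r"
  shows "real (a choose h) * real r ^ h \<le> real (r choose h) * real a ^ h"
proof (induction h)
  case 0 then show ?case by simp
next
  case (Suc h)
  have ida: "real (Suc h) * real (a choose Suc h) = real (a - h) * real (a choose h)"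
    using binomial_absorption[of h a] binomial_absorb_comp[of a h] by (metis of_nat_mult)
  have idr: "real (Suc h) * real (r choose Suc h) = real (r - h) * real (r choose h)"
    using binomial_absorption[of h r] binomial_absorb_comp[of r h] by (metis of_nat_mult)
  have key: "real (a - h) * real r \<le> real (r - h) * real a"
  proof (cases "h \<le> a")
    case True
    then have "h \<le> r" using assms by simp
    moreover have "real a * real h \<le> real r * real h" using assms by (intro mult_right_mono) auto
    ultimately show ?thesis using True assms by (simp add: of_nat_diff algebra_simps)
  next
    case False then show ?thesis by simp
  qed
  have "real (Suc h) * (real (a choose Suc h) * real r ^ Suc h)
        = real r * real r ^ h * (real (Suc h) * real (a choose Suc h))" by (simp add: algebra_simps)
  also have "\<dots> = real r * real r ^ h * (real (a - h) * real (a choose h))" using ida by simp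
  also have "\<dots> = (real (a - h) * real r) * (real (a choose h) * real r ^ h)" by (simp add: algebra_simps)
  also have "\<dots> \<le> (real (a - h) * real r) * (real (r choose h) * real a ^ h)"
    by (intro mult_left_mono Suc.IH) auto
  also have "\<dots> \<le> (real (r - h) * real a) * (real (r choose h) * real a ^ h)"
    by (intro mult_right_mono key) auto
  also have "\<dots> = real a * real a ^ h * (real (r - h) * real (r choose h))" by (simp add: algebra_simps)
  also have "\<dots> = real a * real a ^ h * (real (Suc h) * real (r choose Suc h))" using idr by simp
  also have "\<dots> = real (Suc h) * (real (r choose Suc h) * real a ^ Suc h)" by (simp add: algebra_simps)
  finally show ?case by (simp del: of_nat_Suc)
qed

lemma conv_bound:
  fixes x L :: real assumes "0 \<le> x" "x \<le> 1"
  shows "exp (- (x * L)) \<le> 1 - x + x * exp (- L)"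
proof -
  have "exp ((1 - x) *\<^sub>R 0 + x *\<^sub>R (- L)) \<le> (1 - x) * exp 0 + x * exp (- L)"
    by (rule convex_onD[OF exp_convex]) (use assms in auto)
  then show ?thesis by simp
qed

definition sw :: "'a \<Rightarrow> 'a \<Rightarrow> 'a \<Rightarrow> 'a" where
  "sw a b x = (if x = a then b else if x = b then a else x)"

lemma sw_sw[simp]: "sw a b (sw a b x) = x" by (simp add: sw_def)
lemma inj_sw: "inj (sw a b)" by (metis injI sw_sw)
lemma sw_image_image: "sw a b ` sw a b ` H = H" by (simp add: image_image)
lemma sw_image_subset: "a \<in> R \<Longrightarrow> b \<in> R \<Longrightarrow> H \<subseteq> R \<Longrightarrow> sw a b ` H \<subseteq> R"
  by (auto simp: sw_def)
lemma sw_image_eq: "a \<in> R \<Longrightarrow> b \<in> R \<Longrightarrow> sw a b ` R = R"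
proof
  show "a \<in> R \<Longrightarrow> b \<in> R \<Longrightarrow> sw a b ` R \<subseteq> R" by (auto simp: sw_def)
  show "a \<in> R \<Longrightarrow> b \<in> R \<Longrightarrow> R \<subseteq> sw a b ` R"
    by (auto simp: sw_def image_iff)
qed

lemma symmetry:
  fixes R M :: "'a set" and h :: nat
  assumes fin: "finite R" and MR: "M \<subseteq> R" and e: "e \<in> M" and e': "e' \<in> M"
  defines "F \<equiv> {H. H \<subseteq> R \<and> card H = h}"
  shows "(\<Sum>H\<in>F. if e \<in> H then 1 / real (card (H \<inter> M)) else 0)
       = (\<Sum>H\<in>F. if e' \<in> H then 1 / real (card (H \<inter> M)) else 0)"
proof -
  let ?t = "sw e e'"
  have eR: "e \<in> R" "e' \<in> R" using e e' MR by auto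
  have bij: "bij_betw (image ?t) F F"
  proof (rule bij_betwI[where g="image ?t"])
    show "image ?t \<in> F \<rightarrow> F" unfolding F_def
      using sw_image_subset[OF eR] card_image[OF inj_on_subset[OF inj_sw]] by auto
    show "image ?t \<in> F \<rightarrow> F" unfolding F_def
      using sw_image_subset[OF eR] card_image[OF inj_on_subset[OF inj_sw]] by auto
  qed (auto simp: sw_image_image)
  have cM: "card (?t ` H \<inter> M) = card (H \<inter> M)" for H
  proof -
    have "?t ` M = M" using sw_image_eq[of e M e'] e e' by simp
    moreover have "?t ` (H \<inter> M) = ?t ` H \<inter> ?t ` M" by (rule image_Int[OF inj_sw])
    ultimately have "?t ` H \<inter> M = ?t ` (H \<inter> M)" by simp
    then show ?thesis using card_image[OF inj_on_subset[OF inj_sw]] by simp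
  qed
  have mem: "(e' \<in> ?t ` H) = (e \<in> H)" for H
    by (auto simp: sw_def image_iff)
  have "(\<Sum>H\<in>F. if e' \<in> H then 1 / real (card (H \<inter> M)) else 0)
      = (\<Sum>H\<in>F. if e' \<in> ?t ` H then 1 / real (card (?t ` H \<inter> M)) else 0)"
    by (rule sum.reindex_bij_betw[OF bij, symmetric])
  also have "\<dots> = (\<Sum>H\<in>F. if e \<in> H then 1 / real (card (H \<inter> M)) else 0)"
    by (simp only: mem cM)
  finally show ?thesis by simp
qed



lemma rho_bound:
  fixes r m h k :: nat and eps :: real
  assumes mr: "m \<le> r" and m1: "1 \<le> m" and mk: "m \<le> k" and hr: "h \<le> r"
    and eps: "0 < eps" "eps < 1"
    and hbig: "h = r \<or> real r / real k * ln (1/eps) \<le> real h"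
  shows "real m * (1 - eps) / real k \<le> 1 - real ((r - m) choose h) / real (r choose h)"
proof -
  have kpos: "real k > 0" using m1 mk by simp
  have cpos: "real (r choose h) > 0" using hr by simp
  show ?thesis
  proof (cases "h = r")
    case True
    then have z: "real ((r - m) choose h) = 0" using m1 mr by simp
    have "real m * (1 - eps) \<le> real k * 1" using mk eps by (intro mult_mono) auto
    then show ?thesis unfolding z using kpos by (simp add: field_simps)
  next
    case False
    with hbig have hb: "real r / real k * ln (1/eps) \<le> real h" by simp
    have rpos: "real r > 0" using m1 mr by simp
    define L where "L = ln (1/eps)"
    have L0: "L > 0" unfolding L_def using eps by simp
    have expL: "exp (- L) = eps" unfolding L_def using eps by (simp add: ln_div)
    define x where "x = real m / real k"
    have x01: "0 \<le> x" "x \<le> 1" unfolding x_def using mk kpos by auto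
    have "real ((r - m) choose h) * real r ^ h \<le> real (r choose h) * real (r - m) ^ h"
      by (rule binom_ratio) simp
    then have "real ((r - m) choose h) / real (r choose h) \<le> (real (r - m) / real r) ^ h"
      using cpos rpos by (simp add: field_simps power_divide)
    also have "real (r - m) / real r = 1 + (- (real m / real r))" using mr rpos by (simp add: of_nat_diff field_simps)
    also have "(1 + (- (real m / real r))) ^ h \<le> exp (- (real m / real r)) ^ h"
      by (rule power_mono[OF exp_ge_add_one_self]) (use mr rpos in \<open>simp add: field_simps\<close>)
    also have "\<dots> = exp (real h * (- (real m / real r)))" by (simp only: exp_of_nat_mult)
    also have "\<dots> \<le> exp (- (x * L))"
    proof -
      have "x * L = real m * (real r / real k * L) / real r" unfolding x_def using rpos by simp
      also have "\<dots> \<le> real m * real h / real r" using hb unfolding L_def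
        by (intro divide_right_mono mult_left_mono) auto
      finally show ?thesis by (simp add: mult.commute)
    qed
    also have "\<dots> \<le> 1 - x + x * eps" using conv_bound[OF x01, of L] expL by simp
    finally have "real ((r - m) choose h) / real (r choose h) \<le> 1 - x + x * eps" .
    moreover have "real m * (1 - eps) / real k = x - x * eps" using kpos unfolding x_def by (simp add: field_simps)
    ultimately show ?thesis by linarith
  qed
qed

lemma stoch:
  fixes R M :: "'a set" and v :: "'a \<Rightarrow> real" and w :: "'a set \<Rightarrow> real" and h k :: nat and eps :: real
  assumes fin: "finite R" and MR: "M \<subseteq> R" and Mk: "card M \<le> k"
    and vnn: "\<forall>e\<in>R. 0 \<le> v e"
    and hr: "h \<le> card R"
    and wnn: "\<forall>H. H \<subseteq> R \<and> card H = h \<longrightarrow> 0 \<le> w H"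
    and wge: "\<forall>H e. H \<subseteq> R \<and> card H = h \<longrightarrow> e \<in> H \<longrightarrow> v e \<le> w H"
    and eps: "0 < eps" "eps < 1"
    and hbig: "h = card R \<or> real (card R) / real k * ln (1/eps) \<le> real h"
  shows "(1 - eps) / real k * sum v M \<le> sum w {H. H \<subseteq> R \<and> card H = h} / real (card {H. H \<subseteq> R \<and> card H = h})"
proof -
  define F where "F = {H. H \<subseteq> R \<and> card H = h}"
  define r where "r = card R"
  have finF: "finite F" unfolding F_def by (rule finite_subset[of _ "Pow R"]) (use fin in auto)
  have cardF: "card F = r choose h" unfolding F_def r_def by (rule n_subsets[OF fin])
  have cFpos: "real (card F) > 0" using hr unfolding cardF r_def by simp
  have finM: "finite M" using MR fin finite_subset by blast
  have sumv: "sum v M \<ge> 0" using vnn MR by (intro sum_nonneg) auto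
  show ?thesis
  proof (cases "M = {}")
    case True
    have "sum w F \<ge> 0" using wnn unfolding F_def by (intro sum_nonneg) auto
    then show ?thesis using True unfolding F_def by simp
  next
    case Mne: False
    define m where "m = card M"
    have m1: "1 \<le> m" unfolding m_def using Mne finM by (simp add: Suc_le_eq card_gt_0_iff)
    obtain e0 where e0: "e0 \<in> M" using Mne by blast
    define c where "c H = real (card (H \<inter> M))" for H
    define A where "A e = (\<Sum>H\<in>F. if e \<in> H then 1 / c H else 0)" for e
    have inner: "(\<Sum>e\<in>M. if e \<in> H then g e / c H else 0) = (\<Sum>e\<in>M \<inter> H. g e) / c H" for g H
      by (simp add: sum.inter_restrict[OF finM] sum_divide_distrib) (rule sum.cong, auto)
    have cH: "c H = real (card (M \<inter> H))" for H unfolding c_def by (simp add: Int_commute)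
    have s1: "(\<Sum>H\<in>F. \<Sum>e\<in>M. if e \<in> H then v e / c H else 0) \<le> sum w F"
    proof (rule sum_mono)
      fix H assume HF: "H \<in> F"
      show "(\<Sum>e\<in>M. if e \<in> H then v e / c H else 0) \<le> w H"
      proof (cases "M \<inter> H = {}")
        case True then show ?thesis using inner[where g=v and H=H] wnn HF unfolding F_def by simp
      next
        case False
        have cp: "c H > 0" unfolding cH using False finM by (simp add: card_gt_0_iff)
        have "(\<Sum>e\<in>M \<inter> H. v e) \<le> (\<Sum>e\<in>M \<inter> H. w H)"
          using wge HF unfolding F_def by (intro sum_mono) auto
        also have "\<dots> = c H * w H" unfolding cH by simp
        finally show ?thesis using inner[where g=v and H=H] cp by (simp add: pos_divide_le_eq mult.commute)
      qed
    qed
    have s2: "(\<Sum>H\<in>F. \<Sum>e\<in>M. if e \<in> H then v e / c H else 0) = (\<Sum>e\<in>M. v e * A e)"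
      unfolding A_def by (subst sum.swap) (simp add: sum_distrib_left if_distrib cong: if_cong)
    have s3: "(\<Sum>e\<in>M. v e * A e) = A e0 * sum v M"
    proof -
      have "(\<Sum>e\<in>M. v e * A e) = (\<Sum>e\<in>M. v e * A e0)"
        using symmetry[OF fin MR _ e0, of _ h] unfolding A_def F_def c_def by (intro sum.cong) auto
      then show ?thesis by (simp add: sum_distrib_left mult.commute)
    qed
    define F0 where "F0 = {H. H \<subseteq> R - M \<and> card H = h}"
    have F0F: "F0 = {H \<in> F. M \<inter> H = {}}" unfolding F0_def F_def by auto
    have cardF0: "card F0 = (r - m) choose h" unfolding F0_def r_def m_def
      using n_subsets[of "R - M" h] fin MR finM by (simp add: card_Diff_subset)
    have s4: "real m * A e0 = real (card F) - real (card F0)"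
    proof -
      have "real m * A e0 = (\<Sum>e\<in>M. A e)"
        using symmetry[OF fin MR _ e0, of _ h] unfolding A_def F_def c_def m_def by simp
      also have "\<dots> = (\<Sum>H\<in>F. \<Sum>e\<in>M. if e \<in> H then 1 / c H else 0)" unfolding A_def by (rule sum.swap)
      also have "\<dots> = (\<Sum>H\<in>F. 1 - (if M \<inter> H = {} then 1 else 0))"
      proof (rule sum.cong[OF refl])
        fix H assume "H \<in> F"
        show "(\<Sum>e\<in>M. if e \<in> H then 1 / c H else 0) = 1 - (if M \<inter> H = {} then 1 else 0)"
          using inner[where g="\<lambda>_. 1" and H=H] finM unfolding cH by (auto simp: card_gt_0_iff)
      qed
      also have "\<dots> = real (card F) - real (card {H \<in> F. M \<inter> H = {}})"
        by (simp add: sum_subtractf sum.If_cases[OF finF] Int_def)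
      finally show ?thesis unfolding F0F .
    qed
    have rho: "real m * (1 - eps) / real k \<le> 1 - real ((r - m) choose h) / real (r choose h)"
      by (rule rho_bound) (use m1 hr eps hbig Mk finM fin MR in \<open>auto simp: m_def r_def card_mono\<close>)
    have kpos: "real k > 0" using m1 Mk unfolding m_def by simp
    have "(1 - eps) / real k * sum v M = (real m * (1 - eps) / real k) * sum v M / real m"
      using m1 by simp
    also have "\<dots> \<le> (1 - real ((r - m) choose h) / real (r choose h)) * sum v M / real m"
      using rho sumv m1 by (intro divide_right_mono mult_right_mono) auto
    also have "\<dots> = A e0 * sum v M / real (card F)"
    proof -
      have e: "1 - real ((r - m) choose h) / real (r choose h) = real m * A e0 / real (card F)"
        using s4 cFpos unfolding cardF0 cardF by (simp add: field_simps)
      show ?thesis unfolding e using m1 by (simp add: field_simps)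
    qed
    also have "\<dots> \<le> sum w F / real (card F)"
      using s1 s2 s3 cFpos by (intro divide_right_mono) auto
    finally show ?thesis unfolding F_def .
  qed
qed



lemma expectation_bind_pmf_bounded:
  fixes g :: "'b \<Rightarrow> real"
  assumes "\<And>y. \<bar>g y\<bar> \<le> B"
  shows "measure_pmf.expectation (bind_pmf M N) g = measure_pmf.expectation M (\<lambda>x. measure_pmf.expectation (N x) g)"
  unfolding measure_pmf_bind
  apply (rule integral_bind[where K="count_space UNIV" and B=B and B'=1])
  using assms by (auto simp: measure_pmf.prob_space_axioms prob_space_imp_subprob_space space_subprob_algebra subprob_space_measure_pmf)

lemma card_compl: "card (- (A :: 'a::finite set)) = CARD('a) - card A"
  by (simp add: Compl_eq_Diff_UNIV card_Diff_subset)

context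
  fixes p :: "('e::finite \<Rightarrow> 'o::finite) \<Rightarrow> real"
    and f :: "'e set \<Rightarrow> ('e \<Rightarrow> 'o) \<Rightarrow> real"
    and sel :: "'e set \<Rightarrow> ('e \<rightharpoonup> 'o) \<Rightarrow> 'e"
    and k :: nat and eps :: real and ss :: nat
  assumes ss_def: "ss = greedy_size CARD('e) k eps"
    and p_nonneg: "\<forall>phi. p phi \<ge> 0"
    and f_nonneg: "\<forall>S phi. f S phi \<ge> 0"
    and k_pos: "0 < k" and k_le: "k \<le> CARD('e)"
    and eps: "0 < eps" "eps < 1"
    and mono: "wc_monotone p f"
    and submod: "wc_submodular p f"
    and mindep: "minimal_dependency p f"
    and sel: "greedy_selector p f sel"
begin


lemma ss_props: "1 \<le> ss" "real CARD('e) / real k * ln (1/eps) \<le> real ss"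
   "real ss \<le> real CARD('e) / real k * ln (1/eps) + 1"
proof -
  have L: "ln (1/eps) > 0" using eps by simp
  have pos: "real CARD('e) / real k * ln (1/eps) > 0" using k_pos L by simp
  show "1 \<le> ss" unfolding ss_def greedy_size_def using pos by (simp add: Suc_le_eq)
  show "real CARD('e) / real k * ln (1/eps) \<le> real ss" unfolding ss_def greedy_size_def using pos
    by (simp add: le_nat_iff ceiling_le_iff)
  show "real ss \<le> real CARD('e) / real k * ln (1/eps) + 1" unfolding ss_def greedy_size_def using pos
    by (simp add: of_nat_nat)
qed

definition FH :: "('e \<rightharpoonup> 'o) \<Rightarrow> nat \<Rightarrow> 'e set set" where "FH psi t = {H. H \<subseteq> - dom psi \<and> card H = min ss (CARD('e) - t)}"

lemma FH_props: assumes "card (dom psi) = t" "t < k"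
  shows "finite (FH psi t)" "FH psi t \<noteq> {}" "\<And>H. H \<in> FH psi t \<Longrightarrow> H \<noteq> {} \<and> H \<inter> dom psi = {}"
proof -
  show "finite (FH psi t)" unfolding FH_def by (rule finite_subset[of _ "Pow (UNIV :: 'e set)"]) auto
  have c: "card (- dom psi) = CARD('e) - t" using assms by (simp add: card_compl)
  obtain H where "H \<subseteq> - dom psi" "card H = min ss (CARD('e) - t)"
    using obtain_subset_with_card_n[of "min ss (CARD('e) - t)" "- dom psi"] c by auto
  then show "FH psi t \<noteq> {}" unfolding FH_def by auto
  fix H assume "H \<in> FH psi t"
  moreover have "min ss (CARD('e) - t) \<ge> 1" using ss_props(1) assms k_le by simp
  ultimately show "H \<noteq> {} \<and> H \<inter> dom psi = {}" unfolding FH_def by auto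
qed

lemma run_step: "greedy_run sel ss phi (Suc t) = bind_pmf (greedy_run sel ss phi t) (\<lambda>(psi, c).
       bind_pmf (pmf_of_set (FH psi t)) (\<lambda>H. return_pmf (psi(sel H psi \<mapsto> phi (sel H psi)), c + card H)))"
  unfolding FH_def by simp

lemma run_inv: assumes pp: "p phi > 0"
  shows "t \<le> k \<Longrightarrow> x \<in> set_pmf (greedy_run sel ss phi t) \<Longrightarrow>
     consistent phi (fst x) \<and> card (dom (fst x)) = t \<and> snd x \<le> t * ss"
proof (induction t arbitrary: x)
  case 0 then show ?case by (simp add: consistent_def)
next
  case (Suc t)
  from Suc.prems(2) obtain psi c H where y: "(psi, c) \<in> set_pmf (greedy_run sel ss phi t)"
    and H: "H \<in> set_pmf (pmf_of_set (FH psi t))"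
    and x: "x = (psi(sel H psi \<mapsto> phi (sel H psi)), c + card H)"
    unfolding run_step by auto
  have IH: "consistent phi psi" "card (dom psi) = t" "c \<le> t * ss" using Suc.IH[OF _ y] Suc.prems by auto
  have tk: "t < k" using Suc.prems by simp
  have HF: "H \<in> FH psi t" using H FH_props(1,2)[OF IH(2) tk] by simp
  have Hp: "H \<noteq> {}" "H \<inter> dom psi = {}" using FH_props(3)[OF IH(2) tk HF] by auto
  have v: "valid_partial p psi" by (rule valid_of[OF p_nonneg pp IH(1)])
  have sH: "sel H psi \<in> H" using sel Hp v unfolding greedy_selector_def by blast
  then have nd: "sel H psi \<notin> dom psi" using Hp by auto
  have cH: "card H \<le> ss" using HF unfolding FH_def by simp
  have d: "dom (psi(sel H psi \<mapsto> phi (sel H psi))) = insert (sel H psi) (dom psi)" by simp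
  have A: "card (dom (psi(sel H psi \<mapsto> phi (sel H psi)))) = Suc t" unfolding d using nd IH(2) by simp
  have B: "consistent phi (psi(sel H psi \<mapsto> phi (sel H psi)))" using IH(1) unfolding consistent_def by auto
  have C: "c + card H \<le> Suc t * ss" using IH(3) cH by simp
  show ?case unfolding x fst_conv snd_conv using A B C by blast
qed

lemma fbound: "\<bar>f S phi\<bar> \<le> Max (range (\<lambda>S. f S phi))"
  using f_nonneg by (intro Max_ge) auto

context
  fixes pol :: "('e, 'o) policy"
  assumes polk: "\<forall>phi. p phi > 0 \<longrightarrow> card (selected pol phi) \<le> k"
begin

abbreviation "OPT \<equiv> fwc_policy p f pol"
abbreviation "cc \<equiv> (1 - eps) / real k"

lemma key_step:
  assumes pp: "p phi > 0" and cons: "consistent phi psi" and t: "card (dom psi) = t" and tk: "t < k"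
  shows "f (dom psi) phi + cc * (OPT - f (dom psi) phi) \<le>
     measure_pmf.expectation (pmf_of_set (FH psi t)) (\<lambda>H. f (insert (sel H psi) (dom psi)) phi)"
proof -
  have v: "valid_partial p psi" by (rule valid_of[OF p_nonneg pp cons])
  obtain M where M: "M \<inter> dom psi = {}" "card M \<le> k"
    and opt: "OPT \<le> fcond p f (dom psi) psi + (\<Sum>e\<in>M. fwc p f e psi)"
    using adversary[OF p_nonneg mono submod mindep v polk] by blast
  have fc: "fcond p f (dom psi) psi = f (dom psi) phi"
    using mindep[unfolded minimal_dependency_def, rule_format, OF v pp cons] .
  define h where "h = min ss (CARD('e) - t)"
  have FHd: "FH psi t = {H. H \<subseteq> - dom psi \<and> card H = h}" unfolding FH_def h_def ..
  have ne: "FH psi t \<noteq> {}" and fin: "finite (FH psi t)" using FH_props[OF t tk] by auto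
  have marg: "fwc p f (sel H psi) psi \<le> f (insert (sel H psi) (dom psi)) phi - f (dom psi) phi"
    if HF: "H \<in> FH psi t" for H
  proof -
    have Hp: "H \<noteq> {}" "H \<inter> dom psi = {}" using FH_props(3)[OF t tk HF] by auto
    have sH: "sel H psi \<in> H" using sel Hp v unfolding greedy_selector_def by blast
    then have nd: "sel H psi \<notin> dom psi" using Hp by auto
    let ?e = "sel H psi"
    have c2: "consistent phi (psi(?e \<mapsto> phi ?e))" using cons unfolding consistent_def by auto
    have v2: "valid_partial p (psi(?e \<mapsto> phi ?e))" by (rule valid_of[OF p_nonneg pp c2])
    have "fcond p f (dom (psi(?e \<mapsto> phi ?e))) (psi(?e \<mapsto> phi ?e)) = f (dom (psi(?e \<mapsto> phi ?e))) phi"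
      using mindep[unfolded minimal_dependency_def, rule_format, OF v2 pp c2] .
    then have "fcond p f (insert ?e (dom psi)) (psi(?e \<mapsto> phi ?e)) = f (insert ?e (dom psi)) phi" by simp
    then show ?thesis using fwc_le[OF p_nonneg state_in[OF p_nonneg pp cons], of f ?e] fc by simp
  qed
  have st: "cc * (\<Sum>e\<in>M. fwc p f e psi) \<le>
      sum (\<lambda>H. fwc p f (sel H psi) psi) {H. H \<subseteq> - dom psi \<and> card H = h} / real (card {H. H \<subseteq> - dom psi \<and> card H = h})"
  proof (rule stoch)
    show "finite (- dom psi)" by simp
    show "M \<subseteq> - dom psi" using M by auto
    show "card M \<le> k" using M by simp
    show "\<forall>e\<in>- dom psi. 0 \<le> fwc p f e psi" using mono v unfolding wc_monotone_def by auto
    show "h \<le> card (- dom psi)" unfolding h_def using t by (simp add: card_compl)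
    show "\<forall>H. H \<subseteq> - dom psi \<and> card H = h \<longrightarrow> 0 \<le> fwc p f (sel H psi) psi"
    proof (intro allI impI)
      fix H assume "H \<subseteq> - dom psi \<and> card H = h"
      then have HF: "H \<in> FH psi t" unfolding FHd by simp
      have Hp: "H \<noteq> {}" "H \<inter> dom psi = {}" using FH_props(3)[OF t tk HF] by auto
      have "sel H psi \<in> H" using sel Hp v unfolding greedy_selector_def by blast
      then show "0 \<le> fwc p f (sel H psi) psi" using mono v Hp unfolding wc_monotone_def by auto
    qed
    show "\<forall>H e. H \<subseteq> - dom psi \<and> card H = h \<longrightarrow> e \<in> H \<longrightarrow> fwc p f e psi \<le> fwc p f (sel H psi) psi"
    proof (intro allI impI)
      fix H e assume a: "H \<subseteq> - dom psi \<and> card H = h" "e \<in> H"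
      then have HF: "H \<in> FH psi t" unfolding FHd by simp
      have Hp: "H \<noteq> {}" "H \<inter> dom psi = {}" using FH_props(3)[OF t tk HF] by auto
      then show "fwc p f e psi \<le> fwc p f (sel H psi) psi" using sel v a(2) unfolding greedy_selector_def by blast
    qed
    show "0 < eps" "eps < 1" using eps by auto
    show "h = card (- dom psi) \<or> real (card (- dom psi)) / real k * ln (1 / eps) \<le> real h"
    proof (cases "ss \<le> CARD('e) - t")
      case True
      then have "h = ss" unfolding h_def by simp
      moreover have "real (card (- dom psi)) / real k * ln (1 / eps) \<le> real CARD('e) / real k * ln (1 / eps)"
        using eps k_pos by (intro mult_right_mono divide_right_mono) (auto simp: card_compl)
      ultimately show ?thesis using ss_props(2) by simp
    next
      case False then show ?thesis unfolding h_def using t by (simp add: card_compl)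
    qed
  qed
  have exp_w: "measure_pmf.expectation (pmf_of_set (FH psi t)) (\<lambda>H. fwc p f (sel H psi) psi)
      = sum (\<lambda>H. fwc p f (sel H psi) psi) (FH psi t) / real (card (FH psi t))"
    using integral_pmf_of_set[OF ne fin] .
  have "cc * (OPT - f (dom psi) phi) \<le> cc * (\<Sum>e\<in>M. fwc p f e psi)"
    using opt fc eps k_pos by (intro mult_left_mono) auto
  also have "\<dots> \<le> sum (\<lambda>H. fwc p f (sel H psi) psi) (FH psi t) / real (card (FH psi t))"
    using st unfolding FHd .
  also have "\<dots> \<le> sum (\<lambda>H. f (insert (sel H psi) (dom psi)) phi - f (dom psi) phi) (FH psi t) / real (card (FH psi t))"
    using marg by (intro divide_right_mono sum_mono) auto
  also have "\<dots> = measure_pmf.expectation (pmf_of_set (FH psi t)) (\<lambda>H. f (insert (sel H psi) (dom psi)) phi) - f (dom psi) phi"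
    using ne fin by (simp add: integral_pmf_of_set sum_subtractf diff_divide_distrib card_gt_0_iff)
  finally show ?thesis by simp
qed


lemma g_integrable: "integrable (measure_pmf M) (\<lambda>x. f (dom (fst x)) phi)"
  by (rule measure_pmf.integrable_const_bound[where B="Max (range (\<lambda>S. f S phi))"]) (use fbound in auto)

lemma OPT_nonneg: "0 \<le> OPT" if "p phi0 > 0"
  unfolding fwc_policy_def using that f_nonneg by (subst Min_ge_iff) auto

lemma a_step:
  assumes pp: "p phi > 0" and tk: "t < k"
  shows "(1 - cc) * measure_pmf.expectation (greedy_run sel ss phi t) (\<lambda>x. f (dom (fst x)) phi) + cc * OPT
     \<le> measure_pmf.expectation (greedy_run sel ss phi (Suc t)) (\<lambda>x. f (dom (fst x)) phi)"
proof -
  define B where "B = Max (range (\<lambda>S. f S phi))"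
  have gB: "\<bar>f S phi\<bar> \<le> B" for S unfolding B_def by (rule fbound)
  define inner where "inner y = measure_pmf.expectation (pmf_of_set (FH (fst y) t))
      (\<lambda>H. f (insert (sel H (fst y)) (dom (fst y))) phi)" for y :: "('e \<rightharpoonup> 'o) \<times> nat"
  define N where "N = (\<lambda>(psi, c). bind_pmf (pmf_of_set (FH psi t))
      (\<lambda>H. return_pmf (psi(sel H psi \<mapsto> phi (sel H psi)), c + card H)))"
  have innerN: "measure_pmf.expectation (N y) (\<lambda>x. f (dom (fst x)) phi) = inner y" for y
  proof -
    obtain psi c where y: "y = (psi, c)" by (cases y)
    show ?thesis unfolding y N_def inner_def
      by (simp add: expectation_bind_pmf_bounded[where B=B] gB)
  qed
  have eq: "measure_pmf.expectation (greedy_run sel ss phi (Suc t)) (\<lambda>x. f (dom (fst x)) phi)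
      = measure_pmf.expectation (greedy_run sel ss phi t) inner"
    unfolding run_step N_def[symmetric]
    by (simp add: expectation_bind_pmf_bounded[where B=B] gB innerN)
  have inner_int: "integrable (measure_pmf (greedy_run sel ss phi t)) inner"
  proof (rule measure_pmf.integrable_const_bound[where B=B])
    show "AE x in measure_pmf (greedy_run sel ss phi t). norm (inner x) \<le> B"
    proof (rule AE_pmfI)
      fix y
      have "0 \<le> inner y" unfolding inner_def using f_nonneg by (intro integral_nonneg_AE) auto
      moreover have "inner y \<le> B" unfolding inner_def
        by (rule measure_pmf.integral_le_const)
           (auto intro!: measure_pmf.integrable_const_bound[where B=B] simp: gB abs_le_D1)
      ultimately show "norm (inner y) \<le> B" by simp
    qed
  qed simp
  have lower: "(1 - cc) * f (dom (fst y)) phi + cc * OPT \<le> inner y"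
    if "y \<in> set_pmf (greedy_run sel ss phi t)" for y
  proof -
    have I: "consistent phi (fst y)" "card (dom (fst y)) = t"
      using run_inv[OF pp _ that] tk by auto
    have "f (dom (fst y)) phi + cc * (OPT - f (dom (fst y)) phi) \<le> inner y"
      unfolding inner_def by (rule key_step[OF pp I tk])
    then show ?thesis by (simp add: algebra_simps)
  qed
  have "(1 - cc) * measure_pmf.expectation (greedy_run sel ss phi t) (\<lambda>x. f (dom (fst x)) phi) + cc * OPT
      = measure_pmf.expectation (greedy_run sel ss phi t) (\<lambda>y. (1 - cc) * f (dom (fst y)) phi + cc * OPT)"
  proof -
    have "measure_pmf.expectation (greedy_run sel ss phi t) (\<lambda>y. (1 - cc) * f (dom (fst y)) phi + cc * OPT)
        = measure_pmf.expectation (greedy_run sel ss phi t) (\<lambda>y. (1 - cc) * f (dom (fst y)) phi)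
          + measure_pmf.expectation (greedy_run sel ss phi t) (\<lambda>y. cc * OPT)"
      by (rule Bochner_Integration.integral_add) (auto intro: g_integrable)
    also have "\<dots> = (1 - cc) * measure_pmf.expectation (greedy_run sel ss phi t) (\<lambda>x. f (dom (fst x)) phi) + cc * OPT"
      by simp
    finally show ?thesis by simp
  qed
  also have "\<dots> \<le> measure_pmf.expectation (greedy_run sel ss phi t) inner"
  proof (rule integral_mono_AE)
    show "integrable (measure_pmf (greedy_run sel ss phi t)) (\<lambda>y. (1 - cc) * f (dom (fst y)) phi + cc * OPT)"
      by (rule Bochner_Integration.integrable_add) (auto intro: g_integrable)
  qed (use inner_int lower in \<open>auto intro!: AE_pmfI\<close>)
  finally show ?thesis using eq by simp
qed

lemma a_iter:
  assumes pp: "p phi > 0"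
  shows "t \<le> k \<Longrightarrow> OPT - measure_pmf.expectation (greedy_run sel ss phi t) (\<lambda>x. f (dom (fst x)) phi)
     \<le> (1 - cc) ^ t * (OPT - f {} phi)"
proof (induction t)
  case 0 then show ?case by simp
next
  case (Suc t)
  have cc1: "0 \<le> 1 - cc" using eps k_pos by (simp add: field_simps)
  let ?a = "\<lambda>t. measure_pmf.expectation (greedy_run sel ss phi t) (\<lambda>x. f (dom (fst x)) phi)"
  have "OPT - ?a (Suc t) \<le> (1 - cc) * (OPT - ?a t)"
    using a_step[OF pp, of t] Suc.prems by (simp add: algebra_simps)
  also have "\<dots> \<le> (1 - cc) * ((1 - cc) ^ t * (OPT - f {} phi))"
    using Suc cc1 by (intro mult_left_mono) auto
  finally show ?case by simp
qed

lemma final_bound: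
  assumes pp: "p phi > 0"
  shows "(1 - 1 / exp 1 - eps) * OPT \<le> measure_pmf.expectation (greedy_run sel ss phi k) (\<lambda>x. f (dom (fst x)) phi)"
proof -
  have O: "0 \<le> OPT" by (rule OPT_nonneg[OF pp])
  have cc1: "0 \<le> 1 - cc" using eps k_pos by (simp add: field_simps)
  have "(1 - cc) ^ k \<le> exp (- cc) ^ k"
    by (rule power_mono) (use cc1 exp_ge_add_one_self[of "- cc"] in auto)
  also have "\<dots> = exp (real k * (- cc))" by (simp only: exp_of_nat_mult)
  also have "\<dots> = exp (- ((1 - eps) * 1))" using k_pos by simp
  also have "\<dots> \<le> 1 - (1 - eps) + (1 - eps) * exp (- 1)" using conv_bound[of "1 - eps" 1] eps by simp
  also have "\<dots> \<le> eps + 1 / exp 1" using eps by (simp add: exp_minus field_simps)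
  finally have pk: "(1 - cc) ^ k \<le> eps + 1 / exp 1" .
  have "OPT - measure_pmf.expectation (greedy_run sel ss phi k) (\<lambda>x. f (dom (fst x)) phi) \<le> (1 - cc) ^ k * (OPT - f {} phi)"
    by (rule a_iter[OF pp]) simp
  also have "\<dots> \<le> (1 - cc) ^ k * OPT" using f_nonneg cc1 by (intro mult_left_mono) auto
  also have "\<dots> \<le> (eps + 1 / exp 1) * OPT" using pk O by (intro mult_right_mono) auto
  finally show ?thesis by (simp add: algebra_simps)
qed

end
end

theorem theorem3:
  fixes p :: "('e::finite \<Rightarrow> 'o::finite) \<Rightarrow> real"
    and f :: "'e set \<Rightarrow> ('e \<Rightarrow> 'o) \<Rightarrow> real"
    and sel :: "'e set \<Rightarrow> ('e \<rightharpoonup> 'o) \<Rightarrow> 'e"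
    and k :: nat and eps :: real
  assumes p_nonneg: "\<forall>phi. p phi \<ge> 0"
    and p_sum: "(\<Sum>phi\<in>UNIV. p phi) = 1"
    and f_nonneg: "\<forall>S phi. f S phi \<ge> 0"
    and k_pos: "0 < k" and k_le: "k \<le> CARD('e)"
    and eps: "0 < eps" "eps < 1"
    and mono: "wc_monotone p f"
    and submod: "wc_submodular p f"
    and mindep: "minimal_dependency p f"
    and sel: "greedy_selector p f sel"
  shows "(\<forall>pol :: ('e, 'o) policy. (\<forall>phi. p phi > 0 \<longrightarrow> card (selected pol phi) \<le> k) \<longrightarrow>
            greedy_value p f sel (greedy_size CARD('e) k eps) k \<ge> (1 - 1 / exp 1 - eps) * fwc_policy p f pol)
       \<and> (\<forall>phi. p phi > 0 \<longrightarrow> (\<forall>x \<in> set_pmf (greedy_run sel (greedy_size CARD('e) k eps) phi k).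
            real (snd x) \<le> real CARD('e) * ln (1 / eps) + real k))"
proof -
  define ss where "ss = greedy_size CARD('e) k eps"
  have ne: "{phi. p phi > 0} \<noteq> {}"
  proof
    assume "{phi. p phi > 0} = {}"
    then have "\<forall>phi. p phi \<le> 0" by (auto simp: not_less[symmetric])
    then have "(\<Sum>phi\<in>UNIV. p phi) \<le> 0" by (intro sum_nonpos) auto
    with p_sum show False by simp
  qed
  have fin: "finite {phi. p phi > 0}" by (rule finite_subset[OF subset_UNIV]) simp
  show ?thesis
  proof (intro conjI allI impI ballI)
    fix pol :: "('e, 'o) policy"
    assume polk: "\<forall>phi. p phi > 0 \<longrightarrow> card (selected pol phi) \<le> k"
    have "\<forall>phi\<in>{phi. p phi > 0}. (1 - 1 / exp 1 - eps) * fwc_policy p f pol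
        \<le> measure_pmf.expectation (greedy_run sel ss phi k) (\<lambda>x. f (dom (fst x)) phi)"
      using final_bound[OF ss_def p_nonneg f_nonneg k_pos k_le eps mono submod mindep sel polk] by blast
    then show "(1 - 1 / exp 1 - eps) * fwc_policy p f pol \<le> greedy_value p f sel (greedy_size CARD('e) k eps) k"
      unfolding greedy_value_def ss_def[symmetric] using ne fin by (subst Min_ge_iff) auto
  next
    fix phi x
    assume pp: "p phi > 0" and x: "x \<in> set_pmf (greedy_run sel (greedy_size CARD('e) k eps) phi k)"
    have "snd x \<le> k * ss"
      using run_inv[OF ss_def p_nonneg f_nonneg k_pos k_le eps mono submod mindep sel pp, of k x] x
      unfolding ss_def by simp
    then have "real (snd x) \<le> real k * real ss" by (metis of_nat_le_iff of_nat_mult)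
    also have "\<dots> \<le> real k * (real CARD('e) / real k * ln (1/eps) + 1)"
      using ss_props(3)[OF ss_def p_nonneg f_nonneg k_pos k_le eps mono submod mindep sel] by (intro mult_left_mono) auto
    also have "\<dots> = real CARD('e) * ln (1 / eps) + real k" using k_pos by (simp add: field_simps)
    finally show "real (snd x) \<le> real CARD('e) * ln (1 / eps) + real k" .
  qed
qed

end
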